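(* Let $\mathcal{A}$ be a weighted pushdown system with integer weight function $w$, let $\ell=|\Gamma|\cdot|Q|$ and $\epsilon=\frac{1}{\ell^{(\ell+1)^2}\cdot 2\ell}$. Then $\mathcal{A}^{\epsilon}$ (the same system with weight function $w+\epsilon$) has a good cycle reachable from the initial configuration if and only if for every $\delta>0$ the system $\mathcal{A}^{\delta}$ (with weight function $w+\delta$) has a good cycle reachable from the initial configuration.
   Context: A weighted pushdown system (WPS) is $\mathcal{A}=\langle Q,\Gamma,q_0,E,w\rangle$ with finite states $Q$, finite stack alphabet $\Gamma\ni\bot$ ($\bot$ never pushed or popped), edges $E\subseteq(Q\times\Gamma)\times(Q\times\mathrm{Com}(\Gamma))$ with $\mathrm{Com}(\Gamma)=\{\mathit{skip},\mathit{pop}\}\cup\{\mathit{push}(z)\}$, weights $w:E\to\mathbb{Z}$; initial configuration $(\bot,q_0)$; successor of $(\alpha,q)$ via edge $(q,\mathrm{Top}(\alpha),q',\mathit{com})$ is $(\mathit{com}(\alpha),q')$. For rational $r$, $w+r$ is the weight function $e\mapsto w(e)+r$. A configuration $(\alpha_i,q_i)$ in a path is a local minimum if $\alpha_i$ is a prefix of all later stacks in the path. A good cycle (w.r.t. a given weight function) is a finite path $\langle(\alpha_1,q_1),\dots,(\alpha_n,q_n)\rangle$ of positive total weight whose first configuration is a local minimum, with $q_1=q_n$ and $\mathrm{Top}(\alpha_1)=\mathrm{Top}(\alpha_n)$. *)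

theory Defs
  imports Complex_Main "HOL-Library.Sublist"
begin

text \<open>Stack commands. Stacks are lists with the bottom first and the top last,
  so that "prefix" in the sense of the paper is list prefix.\<close>

datatype 'g com = Skip | Pop | Push 'g

type_synonym ('q, 'g) edge = "('q \<times> 'g) \<times> ('q \<times> 'g com)"
type_synonym ('q, 'g) config = "'g list \<times> 'q"

fun apply_com :: "'g com \<Rightarrow> 'g list \<Rightarrow> 'g list" where
  "apply_com Skip \<alpha> = \<alpha>"
| "apply_com Pop \<alpha> = butlast \<alpha>"
| "apply_com (Push z) \<alpha> = \<alpha> @ [z]"

definition Top :: "'g list \<Rightarrow> 'g" where
  "Top \<alpha> = last \<alpha>"

definition wps :: "'q set \<Rightarrow> 'g set \<Rightarrow> 'g \<Rightarrow> 'q \<Rightarrow> ('q, 'g) edge set \<Rightarrow> bool" where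
  "wps Q \<Gamma> bt q0 E \<longleftrightarrow>
     finite Q \<and> finite \<Gamma> \<and> bt \<in> \<Gamma> \<and> q0 \<in> Q \<and>
     (\<forall>q g q' c. ((q, g), (q', c)) \<in> E \<longrightarrow>
        q \<in> Q \<and> g \<in> \<Gamma> \<and> q' \<in> Q \<and>
        (c = Pop \<longrightarrow> g \<noteq> bt) \<and>
        (\<forall>z. c = Push z \<longrightarrow> z \<in> \<Gamma> \<and> z \<noteq> bt))"

definition step :: "('q, 'g) edge set \<Rightarrow> ('q, 'g) config \<Rightarrow> ('q, 'g) edge \<Rightarrow> ('q, 'g) config \<Rightarrow> bool" where
  "step E c e c' \<longleftrightarrow> e \<in> E \<and>
     (\<exists>com. e = ((snd c, Top (fst c)), (snd c', com)) \<and> fst c' = apply_com com (fst c))"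

definition is_path :: "('q, 'g) edge set \<Rightarrow> ('q, 'g) config list \<Rightarrow> ('q, 'g) edge list \<Rightarrow> bool" where
  "is_path E cs es \<longleftrightarrow> cs \<noteq> [] \<and> length es = length cs - 1 \<and>
     (\<forall>i < length es. step E (cs ! i) (es ! i) (cs ! Suc i))"

definition path_weight :: "(('q, 'g) edge \<Rightarrow> rat) \<Rightarrow> ('q, 'g) edge list \<Rightarrow> rat" where
  "path_weight wt es = (\<Sum>e \<leftarrow> es. wt e)"

definition reachable :: "('q, 'g) edge set \<Rightarrow> 'g \<Rightarrow> 'q \<Rightarrow> ('q, 'g) config \<Rightarrow> bool" where
  "reachable E bt q0 c \<longleftrightarrow>
     (\<exists>cs es. is_path E cs es \<and> hd cs = ([bt], q0) \<and> last cs = c)"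

definition local_min :: "('q, 'g) config list \<Rightarrow> nat \<Rightarrow> bool" where
  "local_min cs i \<longleftrightarrow> (\<forall>j. i < j \<and> j < length cs \<longrightarrow> prefix (fst (cs ! i)) (fst (cs ! j)))"

definition good_cycle :: "('q, 'g) edge set \<Rightarrow> (('q, 'g) edge \<Rightarrow> rat)
    \<Rightarrow> ('q, 'g) config list \<Rightarrow> ('q, 'g) edge list \<Rightarrow> bool" where
  "good_cycle E wt cs es \<longleftrightarrow> is_path E cs es \<and> path_weight wt es > 0 \<and>
     local_min cs 0 \<and> snd (hd cs) = snd (last cs) \<and> Top (fst (hd cs)) = Top (fst (last cs))"

definition has_reachable_good_cycle ::
    "('q, 'g) edge set \<Rightarrow> 'g \<Rightarrow> 'q \<Rightarrow> (('q, 'g) edge \<Rightarrow> int) \<Rightarrow> rat \<Rightarrow> bool" where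
  "has_reachable_good_cycle E bt q0 w r \<longleftrightarrow>
     (\<exists>cs es. good_cycle E (\<lambda>e. of_int (w e) + r) cs es \<and> reachable E bt q0 (hd cs))"

end

theory Submission
  imports Defs "HOL-Library.Multiset"
begin

definition nxt :: "('q, 'g) config \<Rightarrow> ('q, 'g) edge \<Rightarrow> ('q, 'g) config" where
  "nxt c e = (apply_com (snd (snd e)) (fst c), fst (snd e))"

fun run :: "('q, 'g) config \<Rightarrow> ('q, 'g) edge list \<Rightarrow> ('q, 'g) config list" where
  "run c [] = [c]"
| "run c (e # es) = c # run (nxt c e) es"

fun okrun :: "('q, 'g) edge set \<Rightarrow> ('q, 'g) config \<Rightarrow> ('q, 'g) edge list \<Rightarrow> bool" where
  "okrun E c [] = True"
| "okrun E c (e # es) = (e \<in> E \<and> fst e = (snd c, Top (fst c)) \<and> okrun E (nxt c e) es)"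

definition endc :: "('q, 'g) config \<Rightarrow> ('q, 'g) edge list \<Rightarrow> ('q, 'g) config" where
  "endc c es = last (run c es)"

lemma run_ne[simp]: "run c es \<noteq> []"
  by (cases es) auto

lemma hd_run[simp]: "hd (run c es) = c"
  by (cases es) auto

lemma length_run[simp]: "length (run c es) = Suc (length es)"
  by (induction es arbitrary: c) auto

lemma endc_Nil[simp]: "endc c [] = c" by (simp add: endc_def)
lemma endc_Cons[simp]: "endc c (e # es) = endc (nxt c e) es" by (simp add: endc_def)

lemma endc_append: "endc c (es1 @ es2) = endc (endc c es1) es2"
  by (induction es1 arbitrary: c) auto

lemma okrun_append: "okrun E c (es1 @ es2) = (okrun E c es1 \<and> okrun E (endc c es1) es2)"
  by (induction es1 arbitrary: c) auto

lemma set_run_append: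
  "set (run c (es1 @ es2)) = set (run c es1) \<union> set (run (endc c es1) es2)"
proof (induction es1 arbitrary: c)
  case Nil
  then show ?case by (cases es2) auto
next
  case (Cons e es1)
  then show ?case by auto
qed

lemma start_in_run[simp]: "c \<in> set (run c es)"
  by (cases es) auto

lemma endc_in_run: "endc c es \<in> set (run c es)"
  by (simp add: endc_def)

lemma okrun_is_path: "okrun E c es \<Longrightarrow> is_path E (run c es) es"
proof (induction es arbitrary: c)
  case Nil
  then show ?case by (simp add: is_path_def)
next
  case (Cons e es)
  then have IH: "is_path E (run (nxt c e) es) es" by simp
  have st: "step E c e (nxt c e)"
    using Cons.prems by (cases e) (auto simp: step_def nxt_def)
  show ?case unfolding is_path_def
  proof (intro conjI allI impI)
    fix i assume i: "i < length (e # es)"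
    show "step E (run c (e # es) ! i) ((e # es) ! i) (run c (e # es) ! Suc i)"
    proof (cases i)
      case 0 then show ?thesis using st by (cases es) auto
    next
      case (Suc j) then show ?thesis using IH i by (auto simp: is_path_def)
    qed
  qed auto
qed

lemma step_nxt: "step E c e c' \<Longrightarrow> c' = nxt c e \<and> e \<in> E \<and> fst e = (snd c, Top (fst c))"
  by (cases c') (auto simp: step_def nxt_def)

lemma is_path_run: "is_path E cs es \<Longrightarrow> cs = run (hd cs) es \<and> okrun E (hd cs) es"
proof (induction es arbitrary: cs)
  case Nil
  then show ?case by (cases cs) (auto simp: is_path_def)
next
  case (Cons e es)
  from Cons.prems obtain c cs' where cs: "cs = c # cs'" "cs' \<noteq> []"
    by (cases cs; cases "tl cs") (auto simp: is_path_def)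
  have st: "step E c e (hd cs')"
    using Cons.prems cs by (auto simp: is_path_def hd_conv_nth)
  have p': "is_path E cs' es"
    using Cons.prems cs unfolding is_path_def by auto
  from Cons.IH[OF p'] step_nxt[OF st] show ?case using cs by auto
qed

datatype ('q, 'g) item = Sk "('q, 'g) edge" | PP "('q, 'g) edge" "('q, 'g) item list" "('q, 'g) edge"
datatype ('q, 'g) citem = CI "('q, 'g) item" | CU "('q, 'g) edge"

fun iedges :: "('q, 'g) item \<Rightarrow> ('q, 'g) edge list" where
  "iedges (Sk e) = [e]"
| "iedges (PP e1 H e2) = e1 # concat (map iedges H) @ [e2]"

abbreviation hedges :: "('q, 'g) item list \<Rightarrow> ('q, 'g) edge list" where
  "hedges H \<equiv> concat (map iedges H)"

fun cedge :: "('q, 'g) citem \<Rightarrow> ('q, 'g) edge list" where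
  "cedge (CI x) = iedges x"
| "cedge (CU e) = [e]"

abbreviation cedges :: "('q, 'g) citem list \<Rightarrow> ('q, 'g) edge list" where
  "cedges D \<equiv> concat (map cedge D)"

inductive vitem :: "('q, 'g) edge set \<Rightarrow> 'q \<Rightarrow> 'g \<Rightarrow> ('q, 'g) item \<Rightarrow> 'q \<Rightarrow> bool"
  and vhill :: "('q, 'g) edge set \<Rightarrow> 'q \<Rightarrow> 'g \<Rightarrow> ('q, 'g) item list \<Rightarrow> 'q \<Rightarrow> bool"
  for E where
  vSk: "((q, g), (q', Skip)) \<in> E \<Longrightarrow> vitem E q g (Sk ((q, g), (q', Skip))) q'"
| vPP: "((q, g), (p, Push z)) \<in> E \<Longrightarrow> vhill E p z H p' \<Longrightarrow> ((p', z), (q', Pop)) \<in> E \<Longrightarrow>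
      vitem E q g (PP ((q, g), (p, Push z)) H ((p', z), (q', Pop))) q'"
| vNil: "vhill E q g [] q"
| vCons: "vitem E q g x q1 \<Longrightarrow> vhill E q1 g H q' \<Longrightarrow> vhill E q g (x # H) q'"

inductive vclimb :: "('q, 'g) edge set \<Rightarrow> 'q \<Rightarrow> 'g \<Rightarrow> ('q, 'g) citem list \<Rightarrow> 'q \<Rightarrow> 'g \<Rightarrow> bool"
  for E where
  cNil: "vclimb E q g [] q g"
| cCI: "vitem E q g x q1 \<Longrightarrow> vclimb E q1 g D q' g' \<Longrightarrow> vclimb E q g (CI x # D) q' g'"
| cCU: "((q, g), (p, Push z)) \<in> E \<Longrightarrow> vclimb E p z D q' g' \<Longrightarrow> vclimb E q g (CU ((q, g), (p, Push z)) # D) q' g'"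

inductive_simps vhill_Nil: "vhill E q g [] q'"
inductive_simps vhill_Cons: "vhill E q g (x # H) q'"
inductive_simps vclimb_Nil: "vclimb E q g [] q' g'"
inductive_simps vclimb_CI: "vclimb E q g (CI x # D) q' g'"
inductive_simps vclimb_CU: "vclimb E q g (CU e # D) q' g'"

lemma vhill_append: "vhill E q g (A @ B) q' \<longleftrightarrow> (\<exists>q1. vhill E q g A q1 \<and> vhill E q1 g B q')"
  by (induction A arbitrary: q) (auto simp: vhill_Nil vhill_Cons)

lemma vclimb_append: "vclimb E q g (A @ B) q' g' \<longleftrightarrow> (\<exists>q1 g1. vclimb E q g A q1 g1 \<and> vclimb E q1 g1 B q' g')"
proof (induction A arbitrary: q g)
  case Nil
  then show ?case by (auto simp: vclimb_Nil)
next
  case (Cons c A)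
  then show ?case by (cases c) (auto simp: vclimb_CI vclimb_CU)
qed

lemma prefix_snoc_trans: "prefix (\<alpha> @ [z]) \<beta> \<Longrightarrow> prefix \<alpha> \<beta>"
  unfolding prefix_def by auto

lemma sem:
  "vitem E q g x q' \<Longrightarrow> Top \<alpha> = g \<Longrightarrow> okrun E (\<alpha>, q) (iedges x) \<and> endc (\<alpha>, q) (iedges x) = (\<alpha>, q')
     \<and> (\<forall>c\<in>set (run (\<alpha>, q) (iedges x)). prefix \<alpha> (fst c))"
  "vhill E q g H q' \<Longrightarrow> Top \<alpha> = g \<Longrightarrow> okrun E (\<alpha>, q) (hedges H) \<and> endc (\<alpha>, q) (hedges H) = (\<alpha>, q')
     \<and> (\<forall>c\<in>set (run (\<alpha>, q) (hedges H)). prefix \<alpha> (fst c))"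
proof (induction arbitrary: \<alpha> and \<alpha> rule: vitem_vhill.inducts)
  case (vSk q g q')
  then show ?case by (simp add: nxt_def)
next
  case (vPP q g p z H p' q')
  have t: "Top (\<alpha> @ [z]) = z" by (simp add: Top_def)
  let ?e1 = "((q, g), p, Push z)" and ?e2 = "((p', z), q', Pop)"
  have n1: "nxt (\<alpha>, q) ?e1 = (\<alpha> @ [z], p)" by (simp add: nxt_def)
  have n2: "nxt (\<alpha> @ [z], p') ?e2 = (\<alpha>, q')" by (simp add: nxt_def)
  note IHc = vPP(3)[OF t]
  let ?es = "hedges H"
  have IH1: "okrun E (\<alpha> @ [z], p) ?es" using IHc by (rule conjunct1)
  have IH2: "endc (\<alpha> @ [z], p) ?es = (\<alpha> @ [z], p')" using IHc by (metis conjunct1 conjunct2)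
  have IH3: "\<forall>c\<in>set (run (\<alpha> @ [z], p) ?es). prefix (\<alpha> @ [z]) (fst c)" using IHc by (metis conjunct2)
  have ie: "iedges (PP ?e1 H ?e2) = [?e1] @ ?es @ [?e2]"
    by simp
  have ok: "okrun E (\<alpha>, q) ([?e1] @ ?es @ [?e2])"
    unfolding okrun_append endc_append using vPP(1,4,5) IH1 IH2 n1 n2 t by simp
  have en: "endc (\<alpha>, q) ([?e1] @ ?es @ [?e2]) = (\<alpha>, q')"
    unfolding endc_append using IH2 n1 n2 by simp
  have sub: "set (run (\<alpha>, q) ([?e1] @ ?es @ [?e2])) \<subseteq> {(\<alpha>, q)} \<union> set (run (\<alpha> @ [z], p) ?es) \<union> {(\<alpha>, q')}"
    unfolding set_run_append endc_append using IH2 n1 n2 endc_in_run[of "(\<alpha> @ [z], p)" ?es] by simp blast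
  have st: "\<forall>c\<in>set (run (\<alpha>, q) ([?e1] @ ?es @ [?e2])). prefix \<alpha> (fst c)"
  proof
    fix c assume "c \<in> set (run (\<alpha>, q) ([?e1] @ ?es @ [?e2]))"
    with sub have "c = (\<alpha>, q) \<or> c \<in> set (run (\<alpha> @ [z], p) ?es) \<or> c = (\<alpha>, q')" by blast
    then show "prefix \<alpha> (fst c)"
      using IH3 prefix_snoc_trans by fastforce
  qed
  show ?case unfolding ie using ok en st by blast
next
  case (vNil q g)
  then show ?case by simp
next
  case (vCons q g x q1 H q')
  have e: "hedges (x # H) = iedges x @ hedges H" by simp
  note A = vCons(2)[OF vCons.prems] and B = vCons(4)[OF vCons.prems]
  have "okrun E (\<alpha>, q) (iedges x @ hedges H)"
    unfolding okrun_append using A B by simp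
  moreover have "endc (\<alpha>, q) (iedges x @ hedges H) = (\<alpha>, q')"
    unfolding endc_append using A B by simp
  moreover have "\<forall>c\<in>set (run (\<alpha>, q) (iedges x @ hedges H)). prefix \<alpha> (fst c)"
    unfolding set_run_append using A B by (simp add: ball_Un)
  ultimately show ?case unfolding e by blast
qed

lemma sem_climb:
  "vclimb E q g D q' g' \<Longrightarrow> Top \<alpha> = g \<Longrightarrow> okrun E (\<alpha>, q) (cedges D)
    \<and> (\<exists>\<gamma>. endc (\<alpha>, q) (cedges D) = (\<alpha> @ \<gamma>, q') \<and> Top (\<alpha> @ \<gamma>) = g')
     \<and> (\<forall>c\<in>set (run (\<alpha>, q) (cedges D)). prefix \<alpha> (fst c))"
proof (induction arbitrary: \<alpha> rule: vclimb.induct)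
  case (cNil q g)
  have "endc (\<alpha>, q) (cedges []) = (\<alpha> @ [], q) \<and> Top (\<alpha> @ []) = g" using cNil by simp
  then show ?case by auto
next
  case (cCI q g x q1 D q' g')
  note S = sem(1)[OF cCI(1) cCI.prems]
  note I = cCI(3)[OF cCI.prems]
  have e: "cedges (CI x # D) = iedges x @ cedges D" by simp
  have "okrun E (\<alpha>, q) (iedges x @ cedges D)"
    unfolding okrun_append using S I by simp
  moreover have "\<exists>\<gamma>. endc (\<alpha>, q) (iedges x @ cedges D) = (\<alpha> @ \<gamma>, q') \<and> Top (\<alpha> @ \<gamma>) = g'"
    unfolding endc_append using S I by simp
  moreover have "\<forall>c\<in>set (run (\<alpha>, q) (iedges x @ cedges D)). prefix \<alpha> (fst c)"
    unfolding set_run_append using S I by (simp add: ball_Un)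
  ultimately show ?case unfolding e by blast
next
  case (cCU q g p z D q' g')
  have t: "Top (\<alpha> @ [z]) = z" by (simp add: Top_def)
  let ?e1 = "((q, g), p, Push z)"
  have n1: "nxt (\<alpha>, q) ?e1 = (\<alpha> @ [z], p)" by (simp add: nxt_def)
  note IH0 = cCU(3)[OF t]
  obtain \<gamma> where G: "endc (\<alpha> @ [z], p) (cedges D) = ((\<alpha> @ [z]) @ \<gamma>, q')" "Top ((\<alpha> @ [z]) @ \<gamma>) = g'"
    using conjunct1[OF conjunct2[OF IH0]] by blast
  have IH1: "okrun E (\<alpha> @ [z], p) (cedges D)" using IH0 by (rule conjunct1)
  have IH3: "\<forall>c\<in>set (run (\<alpha> @ [z], p) (cedges D)). prefix (\<alpha> @ [z]) (fst c)"
    using IH0 by (metis conjunct2)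
  have e: "cedges (CU ?e1 # D) = [?e1] @ cedges D" by simp
  have "okrun E (\<alpha>, q) ([?e1] @ cedges D)"
    unfolding okrun_append using cCU(1,4) IH1 n1 by simp
  moreover have "endc (\<alpha>, q) ([?e1] @ cedges D) = (\<alpha> @ ([z] @ \<gamma>), q') \<and> Top (\<alpha> @ ([z] @ \<gamma>)) = g'"
    unfolding endc_append using G n1 by simp
  moreover have "\<forall>c\<in>set (run (\<alpha>, q) ([?e1] @ cedges D)). prefix \<alpha> (fst c)"
  proof
    fix c assume "c \<in> set (run (\<alpha>, q) ([?e1] @ cedges D))"
    then have "c = (\<alpha>, q) \<or> c \<in> set (run (\<alpha> @ [z], p) (cedges D))"
      unfolding set_run_append using n1 by simp (metis start_in_run)
    then show "prefix \<alpha> (fst c)" using IH3 prefix_snoc_trans by fastforce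
  qed
  ultimately show ?case unfolding e by blast
qed

lemma step_down:
  assumes "prefix (\<alpha> @ [z]) \<beta>" "prefix \<alpha> (apply_com com \<beta>)" "\<not> prefix (\<alpha> @ [z]) (apply_com com \<beta>)"
  shows "com = Pop \<and> \<beta> = \<alpha> @ [z] \<and> apply_com com \<beta> = \<alpha>"
proof (cases com)
  case Skip
  then show ?thesis using assms by simp
next
  case (Push y)
  then show ?thesis using assms by (simp add: prefix_prefix)
next
  case Pop
  from assms(1) obtain \<delta> where b: "\<beta> = \<alpha> @ [z] @ \<delta>" unfolding prefix_def by auto
  show ?thesis
  proof (cases "\<delta> = []")
    case True
    then show ?thesis using b Pop by simp
  next
    case False
    then have "butlast \<beta> = \<alpha> @ [z] @ butlast \<delta>" using b by (simp add: butlast_append)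
    then have "prefix (\<alpha> @ [z]) (apply_com com \<beta>)" using Pop by (simp add: prefix_def)
    then show ?thesis using assms(3) by blast
  qed
qed

lemma set_run_prefix: "set (run c es1) \<subseteq> set (run c (es1 @ es2))"
  by (simp add: set_run_append)

lemma set_run_suffix: "set (run (endc c es1) es2) \<subseteq> set (run c (es1 @ es2))"
  by (simp add: set_run_append)

lemma split_ret:
  "okrun E c es \<Longrightarrow> prefix (\<alpha> @ [z]) (fst c) \<Longrightarrow> \<forall>c'\<in>set (run c es). prefix \<alpha> (fst c') \<Longrightarrow>
   \<exists>c'\<in>set (run c es). \<not> prefix (\<alpha> @ [z]) (fst c') \<Longrightarrow>
   \<exists>es1 e2 es2. es = es1 @ e2 # es2 \<and> (\<forall>c'\<in>set (run c es1). prefix (\<alpha> @ [z]) (fst c'))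
      \<and> fst (endc c es1) = \<alpha> @ [z] \<and> snd (snd e2) = Pop \<and> fst (nxt (endc c es1) e2) = \<alpha>"
proof (induction es arbitrary: c)
  case Nil
  then show ?case by simp
next
  case (Cons e es)
  show ?case
  proof (cases "prefix (\<alpha> @ [z]) (fst (nxt c e))")
    case True
    have ok: "okrun E (nxt c e) es" using Cons.prems(1) by simp
    have all: "\<forall>c'\<in>set (run (nxt c e) es). prefix \<alpha> (fst c')" using Cons.prems(3) by simp
    have ex: "\<exists>c'\<in>set (run (nxt c e) es). \<not> prefix (\<alpha> @ [z]) (fst c')"
      using Cons.prems(2,4) by auto
    from Cons.IH[OF ok True all ex] obtain es1 e2 es2 where
      R: "es = es1 @ e2 # es2" "\<forall>c'\<in>set (run (nxt c e) es1). prefix (\<alpha> @ [z]) (fst c')"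
      "fst (endc (nxt c e) es1) = \<alpha> @ [z]" "snd (snd e2) = Pop" "fst (nxt (endc (nxt c e) es1) e2) = \<alpha>"
      by blast
    show ?thesis
      apply (rule exI[of _ "e # es1"], rule exI[of _ e2], rule exI[of _ es2])
      using R Cons.prems(2) by simp
  next
    case False
    have "nxt c e \<in> set (run c (e # es))" by simp
    then have pa: "prefix \<alpha> (fst (nxt c e))" using Cons.prems(3) by blast
    have sd: "snd (snd e) = Pop \<and> fst c = \<alpha> @ [z] \<and> fst (nxt c e) = \<alpha>"
      using step_down[of \<alpha> z "fst c" "snd (snd e)"] Cons.prems(2) pa False by (simp add: nxt_def)
    show ?thesis
      apply (rule exI[of _ "[]"], rule exI[of _ e], rule exI[of _ es])
      using sd by simp
  qed
qed

lemma prefix_butlast_False: "\<alpha> \<noteq> [] \<Longrightarrow> \<not> prefix \<alpha> (butlast \<alpha>)"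
proof
  assume a: "\<alpha> \<noteq> []" "prefix \<alpha> (butlast \<alpha>)"
  have "length \<alpha> \<le> length (butlast \<alpha>)" by (rule prefix_length_le[OF a(2)])
  moreover have "0 < length \<alpha>" using a(1) by simp
  ultimately show False by (simp only: length_butlast)
qed

lemma not_prefix_snoc_self: "\<not> prefix (\<alpha> @ [z]) \<alpha>"
proof
  assume "prefix (\<alpha> @ [z]) \<alpha>"
  then have "length (\<alpha> @ [z]) \<le> length \<alpha>" by (rule prefix_length_le)
  then show False by simp
qed

lemma parse_hill:
  "okrun E (\<alpha>, q) es \<Longrightarrow> \<alpha> \<noteq> [] \<Longrightarrow> \<forall>c\<in>set (run (\<alpha>, q) es). prefix \<alpha> (fst c) \<Longrightarrow>
   endc (\<alpha>, q) es = (\<alpha>, q') \<Longrightarrow> \<exists>H. vhill E q (Top \<alpha>) H q' \<and> hedges H = es"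
proof (induction "length es" arbitrary: \<alpha> q q' es rule: less_induct)
  case less
  show ?case
  proof (cases es)
    case Nil
    then have "q = q'" using less.prems(4) by simp
    then show ?thesis using Nil by (intro exI[of _ "[]"]) (simp add: vNil)
  next
    case (Cons e es')
    obtain src q1 com where e: "e = (src, q1, com)" by (cases e) auto
    have o3: "e \<in> E \<and> fst e = (q, Top \<alpha>) \<and> okrun E (nxt (\<alpha>, q) e) es'"
      using less.prems(1) unfolding Cons by simp
    then have src: "src = (q, Top \<alpha>)" and eE: "e \<in> E" and ok': "okrun E (nxt (\<alpha>, q) e) es'"
      using e by auto
    have nin: "nxt (\<alpha>, q) e \<in> set (run (\<alpha>, q) es)" unfolding Cons by simp
    have lt0: "length es' < length es" using Cons by simp
    show ?thesis
    proof (cases com)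
      case Skip
      have n: "nxt (\<alpha>, q) e = (\<alpha>, q1)" using e Skip by (simp add: nxt_def)
      have all: "\<forall>c\<in>set (run (\<alpha>, q1) es'). prefix \<alpha> (fst c)" using less.prems(3) n unfolding Cons by simp
      have en: "endc (\<alpha>, q1) es' = (\<alpha>, q')" using less.prems(4) unfolding Cons by (simp add: n)
      have ok1: "okrun E (\<alpha>, q1) es'" using ok' n by simp
      from less.hyps[OF lt0 ok1 less.prems(2) all en] obtain H' where
        H': "vhill E q1 (Top \<alpha>) H' q'" "hedges H' = es'" by blast
      have "vitem E q (Top \<alpha>) (Sk e) q1" using vSk[of q "Top \<alpha>" q1 E] eE e src Skip by simp
      then have "vhill E q (Top \<alpha>) (Sk e # H') q'" using H'(1) by (rule vCons)
      then show ?thesis using H'(2) Cons by (intro exI[of _ "Sk e # H'"]) simp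
    next
      case Pop
      have n: "nxt (\<alpha>, q) e = (butlast \<alpha>, q1)" using e Pop by (simp add: nxt_def)
      have "prefix \<alpha> (butlast \<alpha>)" using less.prems(3) nin unfolding n by fastforce
      then show ?thesis using less.prems(2) prefix_butlast_False by blast
    next
      case (Push z)
      have n: "nxt (\<alpha>, q) e = (\<alpha> @ [z], q1)" using e Push by (simp add: nxt_def)
      have all: "\<forall>c\<in>set (run (\<alpha> @ [z], q1) es'). prefix \<alpha> (fst c)"
        using less.prems(3) n unfolding Cons by simp
      have en: "endc (\<alpha> @ [z], q1) es' = (\<alpha>, q')" using less.prems(4) n unfolding Cons by simp
      have ex: "\<exists>c'\<in>set (run (\<alpha> @ [z], q1) es'). \<not> prefix (\<alpha> @ [z]) (fst c')"
        using endc_in_run[of "(\<alpha> @ [z], q1)" es'] not_prefix_snoc_self[of \<alpha> z] unfolding en by (intro bexI) auto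
      have ok2: "okrun E (\<alpha> @ [z], q1) es'" using ok' n by simp
      have pz: "prefix (\<alpha> @ [z]) (fst (\<alpha> @ [z], q1))" by simp
      from split_ret[OF ok2 pz all ex] obtain es1 e2 es2 where
        S: "es' = es1 @ e2 # es2" "\<forall>c'\<in>set (run (\<alpha> @ [z], q1) es1). prefix (\<alpha> @ [z]) (fst c')"
        "fst (endc (\<alpha> @ [z], q1) es1) = \<alpha> @ [z]" "snd (snd e2) = Pop"
        "fst (nxt (endc (\<alpha> @ [z], q1) es1) e2) = \<alpha>" by blast
      define p' where "p' = snd (endc (\<alpha> @ [z], q1) es1)"
      have c1: "endc (\<alpha> @ [z], q1) es1 = (\<alpha> @ [z], p')"
        using S(3) p'_def by (metis prod.collapse)
      have okA: "okrun E (\<alpha> @ [z], q1) es1" and okB: "okrun E (\<alpha> @ [z], p') (e2 # es2)"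
        using ok2 okrun_append[of E "(\<alpha> @ [z], q1)" es1 "e2 # es2"] unfolding S(1) c1 by simp_all
      obtain src2 q2 com2 where e2s: "e2 = (src2, q2, com2)" by (cases e2) auto
      have okB': "e2 \<in> E \<and> fst e2 = (p', Top (\<alpha> @ [z])) \<and> okrun E (nxt (\<alpha> @ [z], p') e2) es2"
        using okB by simp
      have e2: "e2 = ((p', z), q2, Pop)" using okB' S(4) e2s by (simp add: Top_def)
      have e2E: "e2 \<in> E" using okB' by simp
      have n2: "nxt (\<alpha> @ [z], p') e2 = (\<alpha>, q2)" using e2 by (simp add: nxt_def)
      have okC: "okrun E (\<alpha>, q2) es2" using okB' n2 by simp
      have lt1: "length es1 < length es" using Cons S(1) by simp
      have lt2: "length es2 < length es" using Cons S(1) by simp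
      have ne: "\<alpha> @ [z] \<noteq> []" by simp
      from less.hyps[OF lt1 okA ne S(2) c1] obtain H1 where
        H1: "vhill E q1 (Top (\<alpha> @ [z])) H1 p'" "hedges H1 = es1" by blast
      have eq: "es = ([e] @ es1 @ [e2]) @ es2" using Cons S(1) by simp
      have ec: "endc (\<alpha>, q) ([e] @ es1 @ [e2]) = (\<alpha>, q2)"
        unfolding endc_append using n c1 n2 by simp
      have sub: "set (run (\<alpha>, q2) es2) \<subseteq> set (run (\<alpha>, q) es)"
        using set_run_suffix[of "(\<alpha>, q)" "[e] @ es1 @ [e2]" es2] unfolding ec eq[symmetric] .
      have all2: "\<forall>c\<in>set (run (\<alpha>, q2) es2). prefix \<alpha> (fst c)"
        using less.prems(3) sub by blast
      have en2: "endc (\<alpha>, q2) es2 = (\<alpha>, q')"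
        using less.prems(4) unfolding eq endc_append[of _ "[e] @ es1 @ [e2]"] ec .
      from less.hyps[OF lt2 okC less.prems(2) all2 en2] obtain H2 where
        H2: "vhill E q2 (Top \<alpha>) H2 q'" "hedges H2 = es2" by blast
      have eT: "e = ((q, Top \<alpha>), q1, Push z)" using e src Push by simp
      have H1': "vhill E q1 z H1 p'" using H1(1) by (simp add: Top_def)
      have "vitem E q (Top \<alpha>) (PP ((q, Top \<alpha>), q1, Push z) H1 ((p', z), q2, Pop)) q2"
        using vPP[of q "Top \<alpha>" q1 z E H1 p' q2] eE eT H1' e2E e2 by simp
      then have "vitem E q (Top \<alpha>) (PP e H1 e2) q2" using eT e2 by simp
      then have "vhill E q (Top \<alpha>) (PP e H1 e2 # H2) q'" using H2(1) by (rule vCons)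
      moreover have "hedges (PP e H1 e2 # H2) = es" using Cons S(1) H1(2) H2(2) by simp
      ultimately show ?thesis by blast
    qed
  qed
qed

lemma parse_climb:
  "okrun E (\<alpha>, q) es \<Longrightarrow> \<alpha> \<noteq> [] \<Longrightarrow> \<forall>c\<in>set (run (\<alpha>, q) es). prefix \<alpha> (fst c) \<Longrightarrow>
   \<exists>D. vclimb E q (Top \<alpha>) D (snd (endc (\<alpha>, q) es)) (Top (fst (endc (\<alpha>, q) es))) \<and> cedges D = es"
proof (induction "length es" arbitrary: \<alpha> q es rule: less_induct)
  case less
  show ?case
  proof (cases es)
    case Nil
    then show ?thesis by (intro exI[of _ "[]"]) (simp add: cNil)
  next
    case (Cons e es')
    obtain src q1 com where e: "e = (src, q1, com)" by (cases e) auto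
    have o3: "e \<in> E \<and> fst e = (q, Top \<alpha>) \<and> okrun E (nxt (\<alpha>, q) e) es'"
      using less.prems(1) unfolding Cons by simp
    then have src: "src = (q, Top \<alpha>)" and eE: "e \<in> E" and ok': "okrun E (nxt (\<alpha>, q) e) es'"
      using e by auto
    have nin: "nxt (\<alpha>, q) e \<in> set (run (\<alpha>, q) es)" unfolding Cons by simp
    have lt0: "length es' < length es" using Cons by simp
    show ?thesis
    proof (cases com)
      case Skip
      have n: "nxt (\<alpha>, q) e = (\<alpha>, q1)" using e Skip by (simp add: nxt_def)
      have all: "\<forall>c\<in>set (run (\<alpha>, q1) es'). prefix \<alpha> (fst c)" using less.prems(3) n unfolding Cons by simp
      have en: "endc (\<alpha>, q) es = endc (\<alpha>, q1) es'" unfolding Cons by (simp add: n)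
      have ok1: "okrun E (\<alpha>, q1) es'" using ok' n by simp
      from less.hyps[OF lt0 ok1 less.prems(2) all] obtain D' where
        D': "vclimb E q1 (Top \<alpha>) D' (snd (endc (\<alpha>, q1) es')) (Top (fst (endc (\<alpha>, q1) es')))" "cedges D' = es'" by blast
      have "vitem E q (Top \<alpha>) (Sk e) q1" using vSk[of q "Top \<alpha>" q1 E] eE e src Skip by simp
      then have "vclimb E q (Top \<alpha>) (CI (Sk e) # D') (snd (endc (\<alpha>, q1) es')) (Top (fst (endc (\<alpha>, q1) es')))"
        using D'(1) by (rule cCI)
      then show ?thesis using D'(2) Cons unfolding en by (intro exI[of _ "CI (Sk e) # D'"]) simp
    next
      case Pop
      have n: "nxt (\<alpha>, q) e = (butlast \<alpha>, q1)" using e Pop by (simp add: nxt_def)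
      have "prefix \<alpha> (butlast \<alpha>)" using less.prems(3) nin unfolding n by fastforce
      then show ?thesis using less.prems(2) prefix_butlast_False by blast
    next
      case (Push z)
      have n: "nxt (\<alpha>, q) e = (\<alpha> @ [z], q1)" using e Push by (simp add: nxt_def)
      have all: "\<forall>c\<in>set (run (\<alpha> @ [z], q1) es'). prefix \<alpha> (fst c)"
        using less.prems(3) n unfolding Cons by simp
      have en: "endc (\<alpha>, q) es = endc (\<alpha> @ [z], q1) es'" using n unfolding Cons by simp
      have ok2: "okrun E (\<alpha> @ [z], q1) es'" using ok' n by simp
      have eT: "e = ((q, Top \<alpha>), q1, Push z)" using e src Push by simp
      have ne: "\<alpha> @ [z] \<noteq> []" by simp
      show ?thesis
      proof (cases "\<forall>c'\<in>set (run (\<alpha> @ [z], q1) es'). prefix (\<alpha> @ [z]) (fst c')")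
        case True
        from less.hyps[OF lt0 ok2 ne True] obtain D' where
          D': "vclimb E q1 (Top (\<alpha> @ [z])) D' (snd (endc (\<alpha> @ [z], q1) es')) (Top (fst (endc (\<alpha> @ [z], q1) es')))"
           "cedges D' = es'" by blast
        have D'': "vclimb E q1 z D' (snd (endc (\<alpha> @ [z], q1) es')) (Top (fst (endc (\<alpha> @ [z], q1) es')))"
          using D'(1) by (simp add: Top_def)
        have "vclimb E q (Top \<alpha>) (CU ((q, Top \<alpha>), q1, Push z) # D') (snd (endc (\<alpha> @ [z], q1) es')) (Top (fst (endc (\<alpha> @ [z], q1) es')))"
          using eE eT D'' by (intro cCU) simp_all
        then show ?thesis using D'(2) Cons eT unfolding en by (intro exI[of _ "CU e # D'"]) simp
      next
        case False
        then have ex: "\<exists>c'\<in>set (run (\<alpha> @ [z], q1) es'). \<not> prefix (\<alpha> @ [z]) (fst c')" by blast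
        have pz: "prefix (\<alpha> @ [z]) (fst (\<alpha> @ [z], q1))" by simp
        from split_ret[OF ok2 pz all ex] obtain es1 e2 es2 where
          S: "es' = es1 @ e2 # es2" "\<forall>c'\<in>set (run (\<alpha> @ [z], q1) es1). prefix (\<alpha> @ [z]) (fst c')"
          "fst (endc (\<alpha> @ [z], q1) es1) = \<alpha> @ [z]" "snd (snd e2) = Pop"
          "fst (nxt (endc (\<alpha> @ [z], q1) es1) e2) = \<alpha>" by blast
        define p' where "p' = snd (endc (\<alpha> @ [z], q1) es1)"
        have c1: "endc (\<alpha> @ [z], q1) es1 = (\<alpha> @ [z], p')"
          using S(3) p'_def by (metis prod.collapse)
        have okA: "okrun E (\<alpha> @ [z], q1) es1" and okB: "okrun E (\<alpha> @ [z], p') (e2 # es2)"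
          using ok2 okrun_append[of E "(\<alpha> @ [z], q1)" es1 "e2 # es2"] unfolding S(1) c1 by simp_all
        obtain src2 q2 com2 where e2s: "e2 = (src2, q2, com2)" by (cases e2) auto
        have okB': "e2 \<in> E \<and> fst e2 = (p', Top (\<alpha> @ [z])) \<and> okrun E (nxt (\<alpha> @ [z], p') e2) es2"
          using okB by simp
        have e2: "e2 = ((p', z), q2, Pop)" using okB' S(4) e2s by (simp add: Top_def)
        have e2E: "e2 \<in> E" using okB' by simp
        have n2: "nxt (\<alpha> @ [z], p') e2 = (\<alpha>, q2)" using e2 by (simp add: nxt_def)
        have okC: "okrun E (\<alpha>, q2) es2" using okB' n2 by simp
        have lt2: "length es2 < length es" using Cons S(1) by simp
        from parse_hill[OF okA ne S(2) c1] obtain H1 where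
          H1: "vhill E q1 (Top (\<alpha> @ [z])) H1 p'" "hedges H1 = es1" by blast
        have eq: "es = ([e] @ es1 @ [e2]) @ es2" using Cons S(1) by simp
        have ec: "endc (\<alpha>, q) ([e] @ es1 @ [e2]) = (\<alpha>, q2)"
          unfolding endc_append using n c1 n2 by simp
        have sub: "set (run (\<alpha>, q2) es2) \<subseteq> set (run (\<alpha>, q) es)"
          using set_run_suffix[of "(\<alpha>, q)" "[e] @ es1 @ [e2]" es2] unfolding ec eq[symmetric] .
        have all2: "\<forall>c\<in>set (run (\<alpha>, q2) es2). prefix \<alpha> (fst c)"
          using less.prems(3) sub by blast
        have en2: "endc (\<alpha>, q) es = endc (\<alpha>, q2) es2"
          unfolding eq endc_append[of _ "[e] @ es1 @ [e2]"] ec ..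
        from less.hyps[OF lt2 okC less.prems(2) all2] obtain D2 where
          D2: "vclimb E q2 (Top \<alpha>) D2 (snd (endc (\<alpha>, q2) es2)) (Top (fst (endc (\<alpha>, q2) es2)))" "cedges D2 = es2" by blast
        have H1': "vhill E q1 z H1 p'" using H1(1) by (simp add: Top_def)
        have "vitem E q (Top \<alpha>) (PP ((q, Top \<alpha>), q1, Push z) H1 ((p', z), q2, Pop)) q2"
          using vPP[of q "Top \<alpha>" q1 z E H1 p' q2] eE eT H1' e2E e2 by simp
        then have "vitem E q (Top \<alpha>) (PP e H1 e2) q2" using eT e2 by simp
        then have "vclimb E q (Top \<alpha>) (CI (PP e H1 e2) # D2) (snd (endc (\<alpha>, q2) es2)) (Top (fst (endc (\<alpha>, q2) es2)))"
          using D2(1) by (rule cCI)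
        moreover have "cedges (CI (PP e H1 e2) # D2) = es" using Cons S(1) H1(2) D2(2) by simp
        ultimately show ?thesis unfolding en2 by blast
      qed
    qed
  qed
qed

fun ikeys :: "('q, 'g) item \<Rightarrow> ('q \<times> 'g \<times> 'q) set" where
  "ikeys (Sk e) = {}"
| "ikeys (PP e1 H e2) = insert (fst (fst e1), snd (fst e1), fst (snd e2)) (\<Union>x\<in>set H. ikeys x)"

abbreviation hkeys :: "('q, 'g) item list \<Rightarrow> ('q \<times> 'g \<times> 'q) set" where
  "hkeys H \<equiv> \<Union>x\<in>set H. ikeys x"

fun Ib :: "nat \<Rightarrow> nat \<Rightarrow> nat" where
  "Ib n 0 = 1"
| "Ib n (Suc k) = n * Ib n k + 2"

lemma Ib_pos: "1 \<le> Ib n k"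
  by (induction k) auto

lemma Ib_mono: "1 \<le> n \<Longrightarrow> k \<le> k' \<Longrightarrow> Ib n k \<le> Ib n k'"
proof (induction k' arbitrary: k)
  case 0
  then show ?case by simp
next
  case (Suc k')
  have step: "Ib n k' \<le> Ib n (Suc k')"
  proof -
    have "1 * Ib n k' \<le> n * Ib n k'" by (rule mult_le_mono1[OF Suc.prems(1)])
    then have h: "Ib n k' \<le> n * Ib n k'" by (simp only: mult_1)
    show ?thesis unfolding Ib.simps using h by linarith
  qed
  show ?case
  proof (cases "k = Suc k'")
    case True then show ?thesis by simp
  next
    case False
    then have "k \<le> k'" using Suc.prems(2) by simp
    then show ?thesis using Suc.IH[OF Suc.prems(1)] step by (meson le_trans)
  qed
qed

definition pump :: "('a \<Rightarrow> bool) \<Rightarrow> ('a \<Rightarrow> ('q, 'g) edge list) \<Rightarrow> nat \<Rightarrow> 'a \<Rightarrow> bool" where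
  "pump V ed B x \<longleftrightarrow> (\<exists>F M0 MP. (\<forall>m. V (F m) \<and> mset (ed (F m)) = M0 + repeat_mset m MP)
      \<and> mset (ed x) = M0 + MP \<and> 0 < size MP \<and> size MP \<le> B)"

lemma pump_lift:
  assumes "pump V ed B x" "\<And>y. V y \<Longrightarrow> V' (f y)" "\<And>y. mset (ed' (f y)) = C + mset (ed y)"
  shows "pump V' ed' B (f x)"
proof -
  from assms(1) obtain F M0 MP where P: "\<forall>m. V (F m) \<and> mset (ed (F m)) = M0 + repeat_mset m MP"
    "mset (ed x) = M0 + MP" "0 < size MP" "size MP \<le> B" unfolding pump_def by blast
  show ?thesis unfolding pump_def
    apply (rule exI[of _ "\<lambda>m. f (F m)"], rule exI[of _ "C + M0"], rule exI[of _ MP])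
    using P assms(2,3) by (simp add: add.assoc)
qed

lemma pigeon_nat:
  assumes "finite S" "\<forall>i\<le>n. f i \<in> S" "card S \<le> n"
  shows "\<exists>i j. i < j \<and> j \<le> n \<and> f i = f j"
proof -
  have "f ` {0..n} \<subseteq> S" using assms(2) by auto
  then have "card (f ` {0..n}) \<le> card S" using assms(1) by (rule card_mono[rotated])
  then have "card (f ` {0..n}) < card {0..n}" using assms(3) by simp
  then have "\<not> inj_on f {0..n}" by (rule pigeonhole)
  then obtain i j where ij: "i \<le> n" "j \<le> n" "i \<noteq> j" "f i = f j" unfolding inj_on_def by auto
  show ?thesis
  proof (cases "i < j")
    case True then show ?thesis using ij by blast
  next
    case False then have "j < i" using ij by simp
    then show ?thesis using ij by metis
  qed
qed

lemma iedges_ne: "iedges x \<noteq> []"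
  by (cases x) auto

lemma length_hedges_bound: "\<forall>x\<in>set H. length (iedges x) \<le> c \<Longrightarrow> length (hedges H) \<le> length H * c"
  by (induction H) auto

lemma length_cedges_bound: "\<forall>x\<in>set D. length (cedge x) \<le> c \<Longrightarrow> length (cedges D) \<le> length D * c"
  by (induction D) auto

lemma length_hedges_pos: "H \<noteq> [] \<Longrightarrow> 0 < length (hedges H)"
  by (cases H) (auto simp: iedges_ne)

lemma cedge_ne: "cedge x \<noteq> []"
  by (cases x) (auto simp: iedges_ne)

lemma length_cedges_pos: "D \<noteq> [] \<Longrightarrow> 0 < length (cedges D)"
  by (cases D) (auto simp: cedge_ne)

lemma vhill_rep: "vhill E s g M s \<Longrightarrow> vhill E s g (concat (replicate m M)) s"
  by (induction m) (auto simp: vhill_append intro: vNil)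

lemma vclimb_rep: "vclimb E s t M s t \<Longrightarrow> vclimb E s t (concat (replicate m M)) s t"
  by (induction m) (auto simp: vclimb_append intro: cNil)

lemma mset_hedges_rep: "mset (hedges (concat (replicate m M))) = repeat_mset m (mset (hedges M))"
  by (induction m) auto

lemma mset_cedges_rep: "mset (cedges (concat (replicate m M))) = repeat_mset m (mset (cedges M))"
  by (induction m) auto

fun isrc :: "('q, 'g) item \<Rightarrow> 'q \<times> 'g" where
  "isrc (Sk e) = fst e"
| "isrc (PP e1 H e2) = fst e1"

fun csrc :: "('q, 'g) citem \<Rightarrow> 'q \<times> 'g" where
  "csrc (CI x) = isrc x"
| "csrc (CU e) = fst e"

lemma vitem_src: "vitem E q g x q' \<Longrightarrow> isrc x = (q, g) \<and> (\<exists>r. (isrc x, r) \<in> E)"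
  by (induction rule: vitem.cases) auto

lemma vhill_Cons_src: "vhill E q g (x # H) q' \<Longrightarrow> fst (isrc x) = q"
  using vitem_src by (fastforce simp: vhill_Cons)

lemma vclimb_Cons_src: "vclimb E q g (c # D) q' g' \<Longrightarrow> csrc c = (q, g) \<and> (\<exists>r. (csrc c, r) \<in> E)"
proof (cases c)
  case (CI x)
  assume "vclimb E q g (c # D) q' g'"
  then obtain q1 where "vitem E q g x q1" using CI by (auto simp: vclimb_CI)
  from vitem_src[OF this] show ?thesis using CI by (simp only: csrc.simps) metis
next
  case (CU e)
  assume "vclimb E q g (c # D) q' g'"
  then obtain p z where "e = ((q, g), p, Push z)" "e \<in> E" using CU by (auto simp: vclimb_CU)
  then show ?thesis using CU by auto
qed

locale WP =
  fixes Q :: "'q set" and \<Gamma> :: "'g set" and bt :: 'g and q0 :: 'q and E :: "('q, 'g) edge set"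
  assumes wps: "wps Q \<Gamma> bt q0 E"
begin

definition "N = card Q"
definition "L = card \<Gamma> * card Q"
definition "KS = Q \<times> {g\<in>\<Gamma>. 2 \<le> card \<Gamma>} \<times> Q"
definition "K0 = card KS"
definition "B = L * Ib N K0"

lemma finQ: "finite Q" and finG: "finite \<Gamma>" and btG: "bt \<in> \<Gamma>" and q0Q: "q0 \<in> Q"
  using wps by (auto simp: wps_def)

lemma N_pos: "1 \<le> N"
  using finQ q0Q unfolding N_def by (metis One_nat_def Suc_leI card_gt_0_iff empty_iff)

lemma G_pos: "1 \<le> card \<Gamma>"
  using finG btG by (metis One_nat_def Suc_leI card_gt_0_iff empty_iff)

lemma N_le_L: "N \<le> L"
  unfolding N_def L_def using G_pos by simp

lemma finKS: "finite KS"
  unfolding KS_def using finQ finG by simp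

lemma edge: "((q, g), (q', c)) \<in> E \<Longrightarrow> q \<in> Q \<and> g \<in> \<Gamma> \<and> q' \<in> Q \<and> (\<forall>z. c = Push z \<longrightarrow> z \<in> \<Gamma> \<and> z \<noteq> bt)"
  using wps unfolding wps_def by blast

lemma keys_sub:
  "vitem E q g x q' \<Longrightarrow> ikeys x \<subseteq> KS"
  "vhill E q g H q' \<Longrightarrow> hkeys H \<subseteq> KS"
proof (induction rule: vitem_vhill.inducts)
  case (vSk q g q')
  then show ?case by simp
next
  case (vPP q g p z H p' q')
  have e1: "q \<in> Q" "g \<in> \<Gamma>" "z \<in> \<Gamma>" "z \<noteq> bt" using edge[OF vPP(1)] by auto
  have e2: "q' \<in> Q" using edge[OF vPP(4)] by auto
  have "{z, bt} \<subseteq> \<Gamma>" using e1 btG by auto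
  then have "card {z, bt} \<le> card \<Gamma>" using finG by (rule card_mono[rotated])
  then have "2 \<le> card \<Gamma>" using e1(4) by simp
  then have "(q, g, q') \<in> KS" unfolding KS_def using e1 e2 by simp
  then show ?case using vPP(3) by simp
next
  case (vNil q g)
  then show ?case by simp
next
  case (vCons q g x q1 H q')
  then show ?case by simp
qed

lemma card_ikeys: "vitem E q g x q' \<Longrightarrow> card (ikeys x) \<le> K0"
  unfolding K0_def using keys_sub(1) finKS by (rule card_mono[rotated])

lemma card_hkeys: "vhill E q g H q' \<Longrightarrow> card (hkeys H) \<le> K0"
  unfolding K0_def using keys_sub(2) finKS by (rule card_mono[rotated])

lemma vhill_split_at:
  assumes "vhill E q g H q'" "i < length H"
  shows "vhill E q g (take i H) (fst (isrc (H ! i))) \<and> vhill E (fst (isrc (H ! i))) g (drop i H) q'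
    \<and> fst (isrc (H ! i)) \<in> Q"
proof -
  from assms(1) obtain s where s: "vhill E q g (take i H) s" "vhill E s g (drop i H) q'"
    using vhill_append[of E q g "take i H" "drop i H" q'] by auto
  have d: "drop i H = H ! i # drop (Suc i) H" using assms(2) by (simp add: Cons_nth_drop_Suc)
  from s(2) obtain s1 where "vitem E s g (H ! i) s1" unfolding d by (auto simp: vhill_Cons)
  from vitem_src[OF this] obtain r where "isrc (H ! i) = (s, g)" "((s, g), r) \<in> E" by auto
  moreover have "s \<in> Q" using edge[of s g "fst r" "snd r"] calculation(2) by simp
  ultimately show ?thesis using s by simp
qed

lemma vclimb_split_at:
  assumes "vclimb E q g D q' g'" "i < length D"
  shows "vclimb E q g (take i D) (fst (csrc (D ! i))) (snd (csrc (D ! i)))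
    \<and> vclimb E (fst (csrc (D ! i))) (snd (csrc (D ! i))) (drop i D) q' g' \<and> csrc (D ! i) \<in> Q \<times> \<Gamma>"
proof -
  from assms(1) obtain s t where s: "vclimb E q g (take i D) s t" "vclimb E s t (drop i D) q' g'"
    using vclimb_append[of E q g "take i D" "drop i D" q' g'] by auto
  have d: "drop i D = D ! i # drop (Suc i) D" using assms(2) by (simp add: Cons_nth_drop_Suc)
  from vclimb_Cons_src[OF s(2)[unfolded d]] obtain r where "csrc (D ! i) = (s, t)" "((s, t), r) \<in> E" by auto
  moreover have "s \<in> Q" "t \<in> \<Gamma>" using edge[of s t "fst r" "snd r"] calculation(2) by simp_all
  ultimately show ?thesis using s by simp
qed

lemma hill_R0:
  assumes V: "vhill E q g H q'" and len: "N < length H" and bnd: "\<forall>x\<in>set H. length (iedges x) \<le> c"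
  shows "pump (\<lambda>y. vhill E q g y q') hedges (N * c) H"
proof -
  let ?f = "\<lambda>i. fst (isrc (H ! i))"
  have "\<forall>i\<le>N. ?f i \<in> Q" using vhill_split_at[OF V] len by auto
  from pigeon_nat[OF finQ this] obtain i j where ij: "i < j" "j \<le> N" "?f i = ?f j"
    unfolding N_def by auto
  define s where "s = ?f i"
  define M where "M = take (j - i) (drop i H)"
  have jl: "j < length H" using ij len by simp
  have A: "vhill E q g (take i H) s" "vhill E s g (drop i H) q'" using vhill_split_at[OF V, of i] jl ij s_def by auto
  have dj: "vhill E s g (drop j H) q'" using vhill_split_at[OF V, of j] jl ij s_def by auto
  have di: "drop i H = M @ drop j H" unfolding M_def
    by (metis append_take_drop_id drop_drop ij(1) le_add_diff_inverse2 less_imp_le_nat)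
  from A(2) obtain s2 where s2: "vhill E s g M s2" "vhill E s2 g (drop j H) q'" unfolding di by (auto simp: vhill_append)
  have dj': "drop j H = H ! j # drop (Suc j) H" using jl by (simp add: Cons_nth_drop_Suc)
  have "s2 = ?f j" using vhill_Cons_src[OF s2(2)[unfolded dj']] by simp
  then have VM: "vhill E s g M s" using s2(1) ij(3) s_def by simp
  have Hd: "H = take i H @ M @ drop j H" using di by (metis append_take_drop_id)
  have lM: "length M = j - i" unfolding M_def using jl by simp
  have Mne: "M \<noteq> []" using lM ij by auto
  have bM: "\<forall>x\<in>set M. length (iedges x) \<le> c" using bnd unfolding M_def by (meson in_set_dropD in_set_takeD)
  have szM: "length (hedges M) \<le> N * c"
  proof -
    have "length (hedges M) \<le> length M * c" by (rule length_hedges_bound[OF bM])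
    also have "\<dots> \<le> N * c" using lM ij by (metis diff_le_self le_trans mult_le_mono1)
    finally show ?thesis .
  qed
  show ?thesis unfolding pump_def
  proof (intro exI conjI allI)
    fix m
    show "vhill E q g (take i H @ concat (replicate m M) @ drop j H) q'"
      using A(1) vhill_rep[OF VM, of m] dj by (auto simp: vhill_append)
    show "mset (hedges (take i H @ concat (replicate m M) @ drop j H)) =
      (mset (hedges (take i H)) + mset (hedges (drop j H))) + repeat_mset m (mset (hedges M))"
      by (simp add: mset_hedges_rep[simplified])
  next
    show "mset (hedges H) = (mset (hedges (take i H)) + mset (hedges (drop j H))) + mset (hedges M)"
      by (subst Hd) simp
    show "0 < size (mset (hedges M))" using length_hedges_pos[OF Mne] by simp
    show "size (mset (hedges M)) \<le> N * c" using szM by simp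
  qed
qed

lemma climb_R1:
  assumes V: "vclimb E q g D q' g'" and len: "L < length D" and bnd: "\<forall>x\<in>set D. length (cedge x) \<le> c"
  shows "pump (\<lambda>y. vclimb E q g y q' g') cedges (L * c) D"
proof -
  let ?f = "\<lambda>i. csrc (D ! i)"
  have "\<forall>i\<le>L. ?f i \<in> Q \<times> \<Gamma>" using vclimb_split_at[OF V] len by auto
  moreover have "card (Q \<times> \<Gamma>) \<le> L" unfolding L_def by (simp add: card_cartesian_product)
  ultimately obtain i j where ij: "i < j" "j \<le> L" "?f i = ?f j"
    using pigeon_nat[of "Q \<times> \<Gamma>" L ?f] finQ finG by auto
  define s where "s = fst (?f i)"
  define t where "t = snd (?f i)"
  define M where "M = take (j - i) (drop i D)"
  have jl: "j < length D" using ij len by simp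
  have A: "vclimb E q g (take i D) s t" "vclimb E s t (drop i D) q' g'"
    using vclimb_split_at[OF V, of i] jl ij s_def t_def by auto
  have dj: "vclimb E s t (drop j D) q' g'" using vclimb_split_at[OF V, of j] jl ij s_def t_def by auto
  have di: "drop i D = M @ drop j D" unfolding M_def
    by (metis append_take_drop_id drop_drop ij(1) le_add_diff_inverse2 less_imp_le_nat)
  from A(2) obtain s2 t2 where s2: "vclimb E s t M s2 t2" "vclimb E s2 t2 (drop j D) q' g'"
    unfolding di by (auto simp: vclimb_append)
  have dj': "drop j D = D ! j # drop (Suc j) D" using jl by (simp add: Cons_nth_drop_Suc)
  have "(s2, t2) = ?f j" using vclimb_Cons_src[OF s2(2)[unfolded dj']] by simp
  then have VM: "vclimb E s t M s t" using s2(1) ij(3) s_def t_def by (metis prod.collapse prod.inject)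
  have Hd: "D = take i D @ M @ drop j D" using di by (metis append_take_drop_id)
  have lM: "length M = j - i" unfolding M_def using jl by simp
  have Mne: "M \<noteq> []" using lM ij by auto
  have bM: "\<forall>x\<in>set M. length (cedge x) \<le> c" using bnd unfolding M_def by (meson in_set_dropD in_set_takeD)
  have szM: "length (cedges M) \<le> L * c"
  proof -
    have "length (cedges M) \<le> length M * c" by (rule length_cedges_bound[OF bM])
    also have "\<dots> \<le> L * c" using lM ij by (metis diff_le_self le_trans mult_le_mono1)
    finally show ?thesis .
  qed
  show ?thesis unfolding pump_def
  proof (intro exI conjI allI)
    fix m
    show "vclimb E q g (take i D @ concat (replicate m M) @ drop j D) q' g'"
      using A(1) vclimb_rep[OF VM, of m] dj by (auto simp: vclimb_append)
    show "mset (cedges (take i D @ concat (replicate m M) @ drop j D)) =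
      (mset (cedges (take i D)) + mset (cedges (drop j D))) + repeat_mset m (mset (cedges M))"
      by (simp add: mset_cedges_rep[simplified])
  next
    show "mset (cedges D) = (mset (cedges (take i D)) + mset (cedges (drop j D))) + mset (cedges M)"
      by (subst Hd) simp
    show "0 < size (mset (cedges M))" using length_cedges_pos[OF Mne] by simp
    show "size (mset (cedges M)) \<le> L * c" using szM by simp
  qed
qed

end

lemma pump_mono: "pump V ed B1 x \<Longrightarrow> B1 \<le> B2 \<Longrightarrow> pump V ed B2 x"
  unfolding pump_def by (meson le_trans)

lemma occ:
  "vitem E a b x a' \<Longrightarrow> (k1, k2, k3) \<in> ikeys x \<Longrightarrow> \<exists>y f C. vitem E k1 k2 y k3 \<and> 2 \<le> length (iedges y) \<and> x = f y
     \<and> (\<forall>y'. vitem E k1 k2 y' k3 \<longrightarrow> vitem E a b (f y') a') \<and> (\<forall>y'. mset (iedges (f y')) = C + mset (iedges y'))"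
  "vhill E a b H a' \<Longrightarrow> (k1, k2, k3) \<in> hkeys H \<Longrightarrow> \<exists>y f C. vitem E k1 k2 y k3 \<and> 2 \<le> length (iedges y) \<and> H = f y
     \<and> (\<forall>y'. vitem E k1 k2 y' k3 \<longrightarrow> vhill E a b (f y') a') \<and> (\<forall>y'. mset (hedges (f y')) = C + mset (iedges y'))"
proof (induction rule: vitem_vhill.inducts)
  case (vSk q g q')
  then show ?case by simp
next
  case (vPP q g p z H p' q')
  let ?x = "PP ((q, g), p, Push z) H ((p', z), q', Pop)"
  show ?case
  proof (cases "(k1, k2, k3) = (q, g, q')")
    case True
    have v: "vitem E q g ?x q'" using vPP(1,2,4) by (rule vitem_vhill.vPP)
    show ?thesis
      apply (rule exI[of _ ?x], rule exI[of _ id], rule exI[of _ "{#}"])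
      using True v by simp
  next
    case False
    then have "(k1, k2, k3) \<in> hkeys H" using vPP.prems by auto
    from vPP(3)[OF this] obtain y f C where Y: "vitem E k1 k2 y k3" "2 \<le> length (iedges y)" "H = f y"
      "\<forall>y'. vitem E k1 k2 y' k3 \<longrightarrow> vhill E p z (f y') p'" "\<forall>y'. mset (hedges (f y')) = C + mset (iedges y')"
      by blast
    show ?thesis
      apply (rule exI[of _ y], rule exI[of _ "\<lambda>r. PP ((q, g), p, Push z) (f r) ((p', z), q', Pop)"],
          rule exI[of _ "C + {#((q, g), p, Push z), ((p', z), q', Pop)#}"])
      using Y vPP(1,4) by (auto intro: vitem_vhill.vPP simp: add_ac)
  qed
next
  case (vNil q g)
  then show ?case by simp
next
  case (vCons q g x q1 H q')
  show ?case
  proof (cases "(k1, k2, k3) \<in> ikeys x")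
    case True
    from vCons(2)[OF True] obtain y f C where Y: "vitem E k1 k2 y k3" "2 \<le> length (iedges y)" "x = f y"
      "\<forall>y'. vitem E k1 k2 y' k3 \<longrightarrow> vitem E q g (f y') q1" "\<forall>y'. mset (iedges (f y')) = C + mset (iedges y')"
      by blast
    show ?thesis
      apply (rule exI[of _ y], rule exI[of _ "\<lambda>r. f r # H"], rule exI[of _ "C + mset (hedges H)"])
      using Y vCons(3) by (auto intro: vitem_vhill.vCons simp: add_ac)
  next
    case False
    then have "(k1, k2, k3) \<in> hkeys H" using vCons.prems by simp
    from vCons(4)[OF this] obtain y f C where Y: "vitem E k1 k2 y k3" "2 \<le> length (iedges y)" "H = f y"
      "\<forall>y'. vitem E k1 k2 y' k3 \<longrightarrow> vhill E q1 g (f y') q'" "\<forall>y'. mset (hedges (f y')) = C + mset (iedges y')"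
      by blast
    show ?thesis
      apply (rule exI[of _ y], rule exI[of _ "\<lambda>r. x # f r"], rule exI[of _ "mset (iedges x) + C"])
      using Y vCons(1) by (auto intro: vitem_vhill.vCons simp: add_ac)
  qed
qed

context WP
begin

lemma B_ge: "N * Ib N K0 \<le> B"
  unfolding B_def using N_le_L by simp

lemma hill_from_items:
  assumes V: "vhill E q g H q'"
    and IH: "\<forall>x\<in>set H. \<forall>a b a'. vitem E a b x a' \<longrightarrow>
        pump (\<lambda>y. vitem E a b y a') iedges B x \<or> length (iedges x) \<le> Ib N (card (ikeys x))"
  shows "pump (\<lambda>y. vhill E q g y q') hedges B H \<or> length (hedges H) \<le> N * Ib N (card (hkeys H))"
proof (cases "\<exists>x A B'. H = A @ x # B' \<and> (\<exists>s s1. vhill E q g A s \<and> vitem E s g x s1 \<and> vhill E s1 g B' q'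
    \<and> pump (\<lambda>y. vitem E s g y s1) iedges B x)")
  case True
  then obtain x A B' s s1 where X: "H = A @ x # B'" "vhill E q g A s" "vitem E s g x s1" "vhill E s1 g B' q'"
    "pump (\<lambda>y. vitem E s g y s1) iedges B x" by blast
  have "pump (\<lambda>y. vhill E q g y q') hedges B (A @ x # B')"
  proof (rule pump_lift[OF X(5), where C = "mset (hedges A) + mset (hedges B')"])
    fix y assume "vitem E s g y s1"
    then have "vhill E s g (y # B') q'" using X(4) by (rule vCons)
    then show "vhill E q g (A @ y # B') q'" unfolding vhill_append using X(2) by blast
  next
    fix y show "mset (hedges (A @ y # B')) = mset (hedges A) + mset (hedges B') + mset (iedges y)"
      by (simp add: add_ac)
  qed
  then show ?thesis using X(1) by simp
next
  case False
  have fin: "finite (hkeys H)" using keys_sub(2)[OF V] finKS by (rule finite_subset)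
  have bnd: "\<forall>x\<in>set H. length (iedges x) \<le> Ib N (card (hkeys H))"
  proof
    fix x assume xH: "x \<in> set H"
    then obtain A B' where H: "H = A @ x # B'" by (metis split_list)
    from V obtain s where S0: "vhill E q g A s" "vhill E s g (x # B') q'"
      unfolding H vhill_append by blast
    from S0(2) obtain s1 where S1: "vitem E s g x s1" "vhill E s1 g B' q'"
      unfolding vhill_Cons by blast
    note S = S0(1) S1
    have np: "\<not> pump (\<lambda>y. vitem E s g y s1) iedges B x"
    proof
      assume P: "pump (\<lambda>y. vitem E s g y s1) iedges B x"
      have "\<exists>x A B'. H = A @ x # B' \<and> (\<exists>s s1. vhill E q g A s \<and> vitem E s g x s1 \<and> vhill E s1 g B' q'
        \<and> pump (\<lambda>y. vitem E s g y s1) iedges B x)"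
        apply (rule exI[of _ x], rule exI[of _ A], rule exI[of _ B'])
        using H S P by blast
      with False show False by blast
    qed
    have "length (iedges x) \<le> Ib N (card (ikeys x))" using IH xH S(2) np by metis
    also have "\<dots> \<le> Ib N (card (hkeys H))"
    proof -
      have "ikeys x \<subseteq> hkeys H" using xH by blast
      then have "card (ikeys x) \<le> card (hkeys H)" by (rule card_mono[OF fin])
      then show ?thesis by (rule Ib_mono[OF N_pos])
    qed
    finally show "length (iedges x) \<le> Ib N (card (hkeys H))" .
  qed
  show ?thesis
  proof (cases "length H \<le> N")
    case True
    have "length (hedges H) \<le> length H * Ib N (card (hkeys H))" by (rule length_hedges_bound[OF bnd])
    also have "\<dots> \<le> N * Ib N (card (hkeys H))" using True by simp
    finally show ?thesis by simp
  next
    case False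
    have "pump (\<lambda>y. vhill E q g y q') hedges (N * Ib N (card (hkeys H))) H"
      using hill_R0[OF V _ bnd] False by simp
    moreover have "N * Ib N (card (hkeys H)) \<le> B"
    proof -
      have "Ib N (card (hkeys H)) \<le> Ib N K0" using Ib_mono[OF N_pos card_hkeys[OF V]] .
      then show ?thesis using B_ge by (meson le_trans mult_le_mono2)
    qed
    ultimately show ?thesis by (blast intro: pump_mono)
  qed
qed

end

context WP
begin

lemma key_item:
  "vitem E q g x q' \<Longrightarrow> pump (\<lambda>y. vitem E q g y q') iedges B x \<or> length (iedges x) \<le> Ib N (card (ikeys x))"
proof (induction x arbitrary: q g q')
  case (Sk e)
  then show ?case by simp
next
  case (PP e1 H e2)
  from PP.prems obtain p z p' where X: "e1 = ((q, g), (p, Push z))" "e1 \<in> E" "vhill E p z H p'"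
    "e2 = ((p', z), (q', Pop))" "e2 \<in> E"
    by (cases rule: vitem.cases) auto
  have IH': "\<forall>x\<in>set H. \<forall>a b a'. vitem E a b x a' \<longrightarrow>
        pump (\<lambda>y. vitem E a b y a') iedges B x \<or> length (iedges x) \<le> Ib N (card (ikeys x))"
    using PP.IH by blast
  have VP: "vitem E q g (PP e1 H' e2) q'" if "vhill E p z H' p'" for H'
    using vitem_vhill.vPP[of q g p z E H' p' q'] X that by simp
  show ?case
  proof (cases "pump (\<lambda>y. vhill E p z y p') hedges B H")
    case True
    have "pump (\<lambda>y. vitem E q g y q') iedges B (PP e1 H e2)"
    proof (rule pump_lift[OF True, where f = "\<lambda>H'. PP e1 H' e2" and C = "{#e1, e2#}"])
      fix y assume "vhill E p z y p'" then show "vitem E q g (PP e1 y e2) q'" by (rule VP)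
    next
      fix y show "mset (iedges (PP e1 y e2)) = {#e1, e2#} + mset (hedges y)" by (simp add: add_ac)
    qed
    then show ?thesis by blast
  next
    case False
    with hill_from_items[OF X(3) IH'] have hb: "length (hedges H) \<le> N * Ib N (card (hkeys H))" by blast
    have key: "ikeys (PP e1 H e2) = insert (q, g, q') (hkeys H)" using X by simp
    show ?thesis
    proof (cases "(q, g, q') \<in> hkeys H")
      case False
      have fin: "finite (hkeys H)" using keys_sub(2)[OF X(3)] finKS by (rule finite_subset)
      have c: "card (ikeys (PP e1 H e2)) = Suc (card (hkeys H))" unfolding key using fin False by simp
      have "length (iedges (PP e1 H e2)) = length (hedges H) + 2" by simp
      also have "\<dots> \<le> N * Ib N (card (hkeys H)) + 2" using hb by simp
      also have "\<dots> = Ib N (card (ikeys (PP e1 H e2)))" unfolding c by simp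
      finally show ?thesis by blast
    next
      case True
      from occ(2)[OF X(3) True] obtain y f C where Y: "vitem E q g y q'" "2 \<le> length (iedges y)" "H = f y"
        "\<forall>y'. vitem E q g y' q' \<longrightarrow> vhill E p z (f y') p'" "\<forall>y'. mset (hedges (f y')) = C + mset (iedges y')"
        by blast
      define G where "G = (\<lambda>r. PP e1 (f r) e2)"
      define F where "F = (\<lambda>m. (G ^^ m) y)"
      have FV: "vitem E q g (F m) q'" for m
      proof (induction m)
        case 0 then show ?case using Y(1) by (simp add: F_def)
      next
        case (Suc m)
        have "F (Suc m) = PP e1 (f (F m)) e2" by (simp add: F_def G_def)
        then show ?case using VP Y(4) Suc by simp
      qed
      have FM: "mset (iedges (F m)) = mset (iedges y) + repeat_mset m (C + {#e1, e2#})" for m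
      proof (induction m)
        case 0 then show ?case by (simp add: F_def)
      next
        case (Suc m)
        have "F (Suc m) = PP e1 (f (F m)) e2" by (simp add: F_def G_def)
        then show ?case using Y(5) Suc by (simp add: add_ac)
      qed
      have sz: "size C + 2 \<le> B"
      proof -
        have "size (mset (hedges H)) = size C + length (iedges y)" using Y(3,5) by simp
        then have "size C + 2 \<le> length (hedges H)" using Y(2) by simp
        also have "\<dots> \<le> N * Ib N (card (hkeys H))" by (rule hb)
        also have "\<dots> \<le> N * Ib N K0" using Ib_mono[OF N_pos card_hkeys[OF X(3)]] by simp
        also have "\<dots> \<le> B" by (rule B_ge)
        finally show ?thesis .
      qed
      have "pump (\<lambda>y. vitem E q g y q') iedges B (PP e1 H e2)"
        unfolding pump_def
        apply (rule exI[of _ F], rule exI[of _ "mset (iedges y)"], rule exI[of _ "C + {#e1, e2#}"])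
        using FV FM sz Y(3,5) by (simp add: add_ac)
      then show ?thesis by blast
    qed
  qed
qed

lemma key_climb:
  assumes V: "vclimb E q g D q' g'"
  shows "pump (\<lambda>y. vclimb E q g y q' g') cedges B D \<or> length (cedges D) \<le> B"
proof (cases "\<exists>x A B'. D = A @ CI x # B' \<and> (\<exists>s t s1. vclimb E q g A s t \<and> vitem E s t x s1 \<and> vclimb E s1 t B' q' g'
    \<and> pump (\<lambda>y. vitem E s t y s1) iedges B x)")
  case True
  then obtain x A B' s t s1 where X: "D = A @ CI x # B'" "vclimb E q g A s t" "vitem E s t x s1" "vclimb E s1 t B' q' g'"
    "pump (\<lambda>y. vitem E s t y s1) iedges B x" by blast
  have "pump (\<lambda>y. vclimb E q g y q' g') cedges B ((\<lambda>r. A @ CI r # B') x)"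
  proof (rule pump_lift[OF X(5), where C = "mset (cedges A) + mset (cedges B')"])
    fix y assume "vitem E s t y s1"
    then have "vclimb E s t (CI y # B') q' g'" using X(4) by (rule cCI)
    then show "vclimb E q g (A @ CI y # B') q' g'" unfolding vclimb_append using X(2) by blast
  next
    fix y show "mset (cedges (A @ CI y # B')) = mset (cedges A) + mset (cedges B') + mset (iedges y)"
      by (simp add: add_ac)
  qed
  then show ?thesis using X(1) by simp
next
  case False
  have bnd: "\<forall>c\<in>set D. length (cedge c) \<le> Ib N K0"
  proof
    fix c assume cD: "c \<in> set D"
    then obtain A B' where Dd: "D = A @ c # B'" by (metis split_list)
    from V obtain s t where S0: "vclimb E q g A s t" "vclimb E s t (c # B') q' g'"
      unfolding Dd vclimb_append by blast
    show "length (cedge c) \<le> Ib N K0"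
    proof (cases c)
      case (CU e)
      then show ?thesis using Ib_pos[of N K0] by simp
    next
      case (CI x)
      from S0(2) obtain s1 where S1: "vitem E s t x s1" "vclimb E s1 t B' q' g'"
        unfolding CI vclimb_CI by blast
      have np: "\<not> pump (\<lambda>y. vitem E s t y s1) iedges B x"
      proof
        assume P: "pump (\<lambda>y. vitem E s t y s1) iedges B x"
        have "\<exists>x A B'. D = A @ CI x # B' \<and> (\<exists>s t s1. vclimb E q g A s t \<and> vitem E s t x s1 \<and> vclimb E s1 t B' q' g'
          \<and> pump (\<lambda>y. vitem E s t y s1) iedges B x)"
          apply (rule exI[of _ x], rule exI[of _ A], rule exI[of _ B'])
          using Dd CI S0(1) S1 P by blast
        with False show False by blast
      qed
      have "length (iedges x) \<le> Ib N (card (ikeys x))" using key_item[OF S1(1)] np by blast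
      also have "\<dots> \<le> Ib N K0" by (rule Ib_mono[OF N_pos card_ikeys[OF S1(1)]])
      finally show ?thesis using CI by simp
    qed
  qed
  show ?thesis
  proof (cases "length D \<le> L")
    case True
    have "length (cedges D) \<le> length D * Ib N K0" by (rule length_cedges_bound[OF bnd])
    also have "\<dots> \<le> L * Ib N K0" using True by simp
    finally show ?thesis unfolding B_def by simp
  next
    case False
    have "pump (\<lambda>y. vclimb E q g y q' g') cedges (L * Ib N K0) D"
      using climb_R1[OF V _ bnd] False by simp
    then show ?thesis unfolding B_def by blast
  qed
qed

end

definition WM :: "(('q, 'g) edge \<Rightarrow> int) \<Rightarrow> rat \<Rightarrow> ('q, 'g) edge multiset \<Rightarrow> rat" where
  "WM w r M = sum_mset (image_mset (\<lambda>e. of_int (w e) + r) M)"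

lemma WM_add: "WM w r (A + B) = WM w r A + WM w r B"
  by (simp add: WM_def)

lemma WM_rep: "WM w r (repeat_mset m M) = of_nat m * WM w r M"
  by (induction m) (auto simp: WM_add algebra_simps WM_def)

lemma WM_split: "WM w r M = of_int (sum_mset (image_mset w M)) + r * of_nat (size M)"
  by (induction M) (auto simp: WM_def algebra_simps)

lemma pw_WM: "path_weight (\<lambda>e. of_int (w e) + r) es = WM w r (mset es)"
  unfolding path_weight_def WM_def by (simp add: sum_mset_sum_list[symmetric])

lemma Ib_le: "Ib n k \<le> (n + 2) ^ k"
proof (induction k)
  case 0 then show ?case by simp
next
  case (Suc k)
  have p: "1 \<le> (n + 2) ^ k" by simp
  have "Ib n (Suc k) = n * Ib n k + 2" by simp
  also have "\<dots> \<le> n * (n + 2) ^ k + 2" using Suc by simp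
  also have "\<dots> \<le> n * (n + 2) ^ k + 2 * (n + 2) ^ k" using p by simp
  also have "\<dots> = (n + 2) ^ Suc k" by (simp add: algebra_simps)
  finally show ?case .
qed

context WP
begin

lemma B_bound: "B \<le> L ^ ((L + 1)\<^sup>2) * (2 * L)"
proof -
  have L1: "1 \<le> L" unfolding L_def using N_pos G_pos N_def by simp
  have B1: "B \<le> L * (N + 2) ^ K0" unfolding B_def using Ib_le by simp
  show ?thesis
  proof (cases "2 \<le> card \<Gamma>")
    case False
    then have "KS = {}" unfolding KS_def by auto
    then have "K0 = 0" unfolding K0_def by simp
    then have "B \<le> L" using B1 by simp
    also have "\<dots> \<le> 1 * (2 * L)" by simp
    also have "\<dots> \<le> L ^ ((L + 1)\<^sup>2) * (2 * L)"
      using L1 by (intro mult_le_mono1) simp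
    finally show ?thesis .
  next
    case True
    then have "KS = Q \<times> \<Gamma> \<times> Q" unfolding KS_def by auto
    then have K: "K0 = N * L" unfolding K0_def N_def L_def by (simp add: card_cartesian_product)
    have L2: "2 * N \<le> L" unfolding L_def N_def using True by simp
    then have L2': "2 \<le> L" using N_pos by simp
    have a: "N + 2 \<le> L * L"
    proof -
      have "N + 2 \<le> L + 2" using N_le_L by simp
      also have "\<dots> \<le> L + L" using L2' by simp
      also have "\<dots> \<le> L * L" using L2' by (metis mult_2 mult_le_mono1)
      finally show ?thesis .
    qed
    have "(N + 2) ^ K0 \<le> (L * L) ^ K0" using a by (rule power_mono) simp
    also have "\<dots> = L ^ (2 * K0)" by (simp add: power_mult_distrib mult_2 power_add)
    also have "\<dots> \<le> L ^ ((L + 1)\<^sup>2)"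
    proof (rule power_increasing)
      have "2 * K0 = (2 * N) * L" using K by simp
      also have "\<dots> \<le> L * L" using L2 by simp
      also have "\<dots> \<le> (L + 1)\<^sup>2" by (simp add: power2_eq_square)
      finally show "2 * K0 \<le> (L + 1)\<^sup>2" .
    qed (use L1 in simp)
    finally have "(N + 2) ^ K0 \<le> L ^ ((L + 1)\<^sup>2)" .
    then have "B \<le> L * L ^ ((L + 1)\<^sup>2)" using B1 by (meson le_trans mult_le_mono2)
    also have "\<dots> \<le> L ^ ((L + 1)\<^sup>2) * (2 * L)" by simp
    finally show ?thesis .
  qed
qed

lemma main:
  fixes eps \<delta> :: rat and w :: "('q, 'g) edge \<Rightarrow> int"
  assumes ep: "0 < eps" "eps * of_nat B \<le> 1" and dp: "0 < \<delta>"
  shows "vclimb E qs gs D qs gs \<Longrightarrow> 0 < WM w eps (mset (cedges D)) \<Longrightarrow>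
    \<exists>D'. vclimb E qs gs D' qs gs \<and> 0 < WM w \<delta> (mset (cedges D'))"
proof (induction "length (cedges D)" arbitrary: D rule: less_induct)
  case less
  show ?case
  proof (cases "length (cedges D) \<le> B")
    case True
    define W where "W = sum_mset (image_mset w (mset (cedges D)))"
    define n where "n = length (cedges D)"
    have ew: "WM w eps (mset (cedges D)) = of_int W + eps * of_nat n"
      unfolding W_def n_def by (simp add: WM_split)
    have "eps * of_nat n \<le> eps * of_nat B" using True ep(1) unfolding n_def by simp
    then have "eps * of_nat n \<le> 1" using ep(2) by simp
    then have "(of_int W :: rat) > -1" using less.prems(2) ew by linarith
    then have "(of_int (-1) :: rat) < of_int W" by simp
    then have "-1 < W" by (simp only: of_int_less_iff)
    then have W0: "W \<ge> 0" by simp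
    have n0: "n > 0"
    proof (rule ccontr)
      assume "\<not> n > 0"
      then have "cedges D = []" unfolding n_def by simp
      then have e: "mset (cedges D) = {#}" by (simp only: mset.simps)
      show False using less.prems(2) unfolding WM_def e by simp
    qed
    have "WM w \<delta> (mset (cedges D)) = of_int W + \<delta> * of_nat n"
      unfolding W_def n_def by (simp add: WM_split)
    moreover have "0 < \<delta> * of_nat n" using dp n0 by simp
    moreover have "(0::rat) \<le> of_int W" using W0 by simp
    ultimately show ?thesis using less.prems(1) by (intro exI[of _ D]) simp
  next
    case False
    with key_climb[OF less.prems(1)] have P: "pump (\<lambda>y. vclimb E qs gs y qs gs) cedges B D" by simp
    then obtain F M0 MP where FP: "\<forall>m. vclimb E qs gs (F m) qs gs \<and> mset (cedges (F m)) = M0 + repeat_mset m MP"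
      "mset (cedges D) = M0 + MP" "0 < size MP" "size MP \<le> B" unfolding pump_def by blast
    have F0: "mset (cedges (F 0)) = M0" using FP(1) by simp
    have lt: "length (cedges (F 0)) < length (cedges D)"
    proof -
      have "length (cedges (F 0)) = size M0" using F0 by (metis size_mset)
      moreover have "length (cedges D) = size M0 + size MP" using FP(2) by (metis size_mset size_union)
      ultimately show ?thesis using FP(3) by simp
    qed
    show ?thesis
    proof (cases "0 < WM w eps (mset (cedges (F 0)))")
      case True
      show ?thesis using less.hyps[OF lt _ True] FP(1) by blast
    next
      case False
      then have "WM w eps M0 \<le> 0" using F0 by simp
      then have pos: "0 < WM w eps MP" using less.prems(2) FP(2) WM_add[of w eps M0 MP] by simp
      define Wp where "Wp = sum_mset (image_mset w MP)"
      have "eps * of_nat (size MP) \<le> eps * of_nat B" using FP(4) ep(1) by simp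
      then have "eps * of_nat (size MP) \<le> 1" using ep(2) by simp
      moreover have "WM w eps MP = of_int Wp + eps * of_nat (size MP)" unfolding Wp_def by (simp add: WM_split)
      ultimately have "(of_int Wp :: rat) > -1" using pos by linarith
      then have "(of_int (-1) :: rat) < of_int Wp" by simp
      then have "-1 < Wp" by (simp only: of_int_less_iff)
      then have W0: "Wp \<ge> 0" by simp
      have dpos: "0 < WM w \<delta> MP"
      proof -
        have "WM w \<delta> MP = of_int Wp + \<delta> * of_nat (size MP)" unfolding Wp_def by (simp add: WM_split)
        moreover have "0 < \<delta> * of_nat (size MP)" using dp FP(3) by simp
        moreover have "(0::rat) \<le> of_int Wp" using W0 by simp
        ultimately show ?thesis by simp
      qed
      obtain m where m: "- WM w \<delta> M0 < of_nat m * WM w \<delta> MP" using ex_less_of_nat_mult[OF dpos] by blast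
      have "WM w \<delta> (mset (cedges (F m))) = WM w \<delta> M0 + of_nat m * WM w \<delta> MP"
        using FP(1) by (simp add: WM_add WM_rep)
      then have "0 < WM w \<delta> (mset (cedges (F m)))" using m by simp
      then show ?thesis using FP(1) by blast
    qed
  qed
qed

end

lemma okrun_inv:
  assumes W: "wps Q \<Gamma> bt q0 E"
  shows "okrun E c es \<Longrightarrow> (\<exists>r. fst c = bt # r \<and> bt \<notin> set r) \<Longrightarrow>
    \<forall>c'\<in>set (run c es). \<exists>r. fst c' = bt # r \<and> bt \<notin> set r"
proof (induction es arbitrary: c)
  case Nil
  then show ?case by simp
next
  case (Cons e es)
  obtain r where r: "fst c = bt # r" "bt \<notin> set r" using Cons.prems(2) by blast
  obtain q g q' com where e: "e = ((q, g), (q', com))" by (metis prod.collapse)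
  have eE: "e \<in> E" and src: "(q, g) = (snd c, Top (fst c))" and ok: "okrun E (nxt c e) es"
    using Cons.prems(1) e by auto
  have ed: "\<forall>z. com = Push z \<longrightarrow> z \<noteq> bt" "com = Pop \<longrightarrow> g \<noteq> bt"
    using W eE e unfolding wps_def by blast+
  have "\<exists>r. fst (nxt c e) = bt # r \<and> bt \<notin> set r"
  proof (cases com)
    case Skip
    then show ?thesis using r e by (simp add: nxt_def)
  next
    case (Push z)
    then show ?thesis using r e ed(1) by (simp add: nxt_def)
  next
    case Pop
    have "g = last (bt # r)" using src r by (simp add: Top_def)
    then have "r \<noteq> []" using ed(2) Pop by auto
    then have "butlast (bt # r) = bt # butlast r" by simp
    moreover have "bt \<notin> set (butlast r)" using r(2) by (meson in_set_butlastD)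
    ultimately show ?thesis using r e Pop by (simp add: nxt_def)
  qed
  then have "\<forall>c'\<in>set (run (nxt c e) es). \<exists>r. fst c' = bt # r \<and> bt \<notin> set r" using Cons.IH ok by blast
  then show ?case using Cons.prems(2) by simp
qed

lemma reachable_ne:
  assumes W: "wps Q \<Gamma> bt q0 E" and R: "reachable E bt q0 c"
  shows "fst c \<noteq> []"
proof -
  from R obtain cs es where P: "is_path E cs es" "hd cs = ([bt], q0)" "last cs = c" unfolding reachable_def by blast
  from is_path_run[OF P(1)] have cs: "cs = run (hd cs) es" "okrun E (hd cs) es" by auto
  have "\<forall>c'\<in>set (run (hd cs) es). \<exists>r. fst c' = bt # r \<and> bt \<notin> set r"
    using okrun_inv[OF W cs(2)] P(2) by simp
  moreover have "c \<in> set (run (hd cs) es)" using P(3) cs(1) endc_in_run unfolding endc_def by metis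
  ultimately show ?thesis by fastforce
qed

context WP
begin

lemma main_final:
  fixes eps \<delta> :: rat and w :: "('q, 'g) edge \<Rightarrow> int"
  assumes "vclimb E qs gs D qs gs" "0 < WM w eps (mset (cedges D))" "0 < \<delta>"
    and epsd: "eps = 1 / (of_nat ((card \<Gamma> * card Q) ^ ((card \<Gamma> * card Q + 1)\<^sup>2)) * (2 * of_nat (card \<Gamma> * card Q)))"
  shows "\<exists>D'. vclimb E qs gs D' qs gs \<and> 0 < WM w \<delta> (mset (cedges D'))"
proof -
  have Ld: "card \<Gamma> * card Q = L" by (simp add: L_def)
  have L1: "1 \<le> L" unfolding L_def using N_pos G_pos N_def by simp
  define den where "den = L ^ ((L + 1)\<^sup>2) * (2 * L)"
  have dpos: "0 < den" unfolding den_def using L1 by simp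
  have e: "eps = 1 / of_nat den" unfolding epsd Ld den_def by simp
  have ep: "0 < eps" using dpos e by simp
  have "of_nat B \<le> (of_nat den :: rat)" using B_bound unfolding den_def by (simp only: of_nat_le_iff)
  then have "eps * of_nat B \<le> 1" using dpos unfolding e by (simp add: divide_le_eq)
  from main[OF ep this assms(3) assms(1,2)] show ?thesis .
qed

end

theorem lemma7:
  fixes Q :: "'q set" and \<Gamma> :: "'g set" and bt :: 'g and q0 :: 'q
    and E :: "('q, 'g) edge set" and w :: "('q, 'g) edge \<Rightarrow> int"
  assumes "wps Q \<Gamma> bt q0 E"
  defines "L \<equiv> card \<Gamma> * card Q"
  defines "eps \<equiv> 1 / (of_nat (L ^ ((L + 1)\<^sup>2)) * (2 * of_nat L) :: rat)"
  shows "has_reachable_good_cycle E bt q0 w eps \<longleftrightarrow>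
         (\<forall>\<delta>::rat. \<delta> > 0 \<longrightarrow> has_reachable_good_cycle E bt q0 w \<delta>)"
proof
  have WPa: "WP Q \<Gamma> bt q0 E" using assms(1) by (unfold_locales)
  have L1: "1 \<le> L" unfolding L_def using WP.N_pos[OF WPa] WP.G_pos[OF WPa] WP.N_def[OF WPa] by simp
  show "\<forall>\<delta>::rat. \<delta> > 0 \<longrightarrow> has_reachable_good_cycle E bt q0 w \<delta> \<Longrightarrow> has_reachable_good_cycle E bt q0 w eps"
  proof -
    assume A: "\<forall>\<delta>::rat. \<delta> > 0 \<longrightarrow> has_reachable_good_cycle E bt q0 w \<delta>"
    have "0 < eps" unfolding eps_def using L1 by simp
    then show ?thesis using A by blast
  qed
  assume "has_reachable_good_cycle E bt q0 w eps"
  then obtain cs es where G: "good_cycle E (\<lambda>e. of_int (w e) + eps) cs es" and R: "reachable E bt q0 (hd cs)"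
    unfolding has_reachable_good_cycle_def by blast
  define \<alpha> where "\<alpha> = fst (hd cs)"
  define qs where "qs = snd (hd cs)"
  define gs where "gs = Top \<alpha>"
  have P: "is_path E cs es" and wpos: "0 < path_weight (\<lambda>e. of_int (w e) + eps) es"
    and lm: "local_min cs 0" and st: "snd (hd cs) = snd (last cs)" and tp: "Top (fst (hd cs)) = Top (fst (last cs))"
    using G unfolding good_cycle_def by auto
  from is_path_run[OF P] have csr: "cs = run (\<alpha>, qs) es" and ok: "okrun E (\<alpha>, qs) es"
    unfolding \<alpha>_def qs_def by auto
  have ne: "\<alpha> \<noteq> []" using reachable_ne[OF assms(1) R] unfolding \<alpha>_def .
  have pre: "\<forall>c\<in>set (run (\<alpha>, qs) es). prefix \<alpha> (fst c)"
  proof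
    fix c assume "c \<in> set (run (\<alpha>, qs) es)"
    then obtain j where j: "j < length cs" "c = cs ! j" unfolding csr[symmetric] by (metis in_set_conv_nth)
    show "prefix \<alpha> (fst c)"
    proof (cases "j = 0")
      case True
      then have "c = hd cs" using j csr by (metis hd_conv_nth hd_run run_ne)
      then show ?thesis unfolding \<alpha>_def by simp
    next
      case False
      then have "prefix (fst (cs ! 0)) (fst (cs ! j))" using lm j unfolding local_min_def by simp
      moreover have "cs ! 0 = hd cs" using csr by (metis hd_conv_nth hd_run run_ne)
      ultimately show ?thesis using j unfolding \<alpha>_def by simp
    qed
  qed
  have en: "endc (\<alpha>, qs) es = last cs" unfolding endc_def using csr by simp
  from parse_climb[OF ok ne pre] obtain D where
    D: "vclimb E qs (Top \<alpha>) D (snd (endc (\<alpha>, qs) es)) (Top (fst (endc (\<alpha>, qs) es)))" "cedges D = es" by blast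
  have VD: "vclimb E qs gs D qs gs" using D(1) unfolding en gs_def using st tp
    unfolding qs_def \<alpha>_def by simp
  have WD: "0 < WM w eps (mset (cedges D))" using wpos D(2) by (simp add: pw_WM)
  show "\<forall>\<delta>::rat. \<delta> > 0 \<longrightarrow> has_reachable_good_cycle E bt q0 w \<delta>"
  proof (intro allI impI)
    fix \<delta> :: rat assume dp: "0 < \<delta>"
    from WP.main_final[OF WPa VD WD dp] obtain D' where D': "vclimb E qs gs D' qs gs" "0 < WM w \<delta> (mset (cedges D'))"
      using eps_def L_def by blast
    let ?es = "cedges D'"
    let ?cs = "run (\<alpha>, qs) ?es"
    have S: "okrun E (\<alpha>, qs) ?es" "\<exists>\<gamma>. endc (\<alpha>, qs) ?es = (\<alpha> @ \<gamma>, qs) \<and> Top (\<alpha> @ \<gamma>) = gs"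
      "\<forall>c\<in>set ?cs. prefix \<alpha> (fst c)"
      using sem_climb[OF D'(1), of \<alpha>] gs_def by blast+
    obtain \<gamma> where \<gamma>: "endc (\<alpha>, qs) ?es = (\<alpha> @ \<gamma>, qs)" "Top (\<alpha> @ \<gamma>) = gs" using S(2) by blast
    have lst: "last ?cs = (\<alpha> @ \<gamma>, qs)" using \<gamma>(1) unfolding endc_def .
    have gc: "good_cycle E (\<lambda>e. of_int (w e) + \<delta>) ?cs ?es"
      unfolding good_cycle_def
    proof (intro conjI)
      show "is_path E ?cs ?es" by (rule okrun_is_path[OF S(1)])
      show "0 < path_weight (\<lambda>e. of_int (w e) + \<delta>) ?es" using D'(2) by (simp add: pw_WM)
      show "local_min ?cs 0" unfolding local_min_def
      proof (intro allI impI)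
        fix j assume "0 < j \<and> j < length ?cs"
        then have "?cs ! j \<in> set ?cs" by simp
        then have "prefix \<alpha> (fst (?cs ! j))" using S(3) by blast
        moreover have "?cs ! 0 = (\<alpha>, qs)" by (metis hd_conv_nth hd_run run_ne)
        ultimately show "prefix (fst (?cs ! 0)) (fst (?cs ! j))" by simp
      qed
      show "snd (hd ?cs) = snd (last ?cs)" using lst by simp
      show "Top (fst (hd ?cs)) = Top (fst (last ?cs))" using lst \<gamma>(2) gs_def by simp
    qed
    have "hd ?cs = hd cs" unfolding \<alpha>_def qs_def by simp
    then have "reachable E bt q0 (hd ?cs)" using R by simp
    then show "has_reachable_good_cycle E bt q0 w \<delta>"
      unfolding has_reachable_good_cycle_def using gc by blast
  qed
qed

end
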